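(* Let $p\in(1,\infty)$ and let $\mu,\nu$ be Radon measures on $\mathbb{R}^N$ without common atoms. Assume that a kernel $K\in L^2_{\mathrm{loc}}(\mu\times\nu)$ is restrictedly $L^p$ bounded with restricted norm $C$. Then the integral operator $T$, $Tf(s)=\int K(s,t)f(t)\,d\mu(t)$ (defined for bounded compactly supported Borel $f$), is a bounded operator $L^p(\mu)\to L^p(\nu)$ with norm at most $2C$.
   Context: A kernel $K$ on $\mathbb{R}^N\times\mathbb{R}^N$ is restrictedly $L^p$ bounded (as a formal operator $L^p(\mu)\to L^p(\nu)$) if $\left|\int K(s,t)f(t)g(s)\,d\mu(t)\,d\nu(s)\right|\le C\|f\|_{L^p(\mu)}\|g\|_{L^{p'}(\nu)}$, $1/p+1/p'=1$, for all bounded Borel $f,g$ with compact supports satisfying $\operatorname{dist}(\operatorname{supp}f,\operatorname{supp}g)>0$; the least such $C$ is the restricted norm of $K$. *)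

theory Defs
  imports "HOL-Analysis.Analysis"
begin

definition fsupp :: "('a::topological_space \<Rightarrow> real) \<Rightarrow> 'a set" where
  "fsupp f = closure {x. f x \<noteq> 0}"

definition radon :: "'a::euclidean_space measure \<Rightarrow> bool" where
  "radon M \<longleftrightarrow> sets M = sets borel \<and> (\<forall>S. compact S \<longrightarrow> emeasure M S < \<infinity>)"

definition test_fun :: "('a::euclidean_space \<Rightarrow> real) \<Rightarrow> bool" where
  "test_fun f \<longleftrightarrow> f \<in> borel_measurable borel \<and> bounded (range f) \<and> compact (fsupp f)"

text \<open>L^p norm (for the functions used here, which are p-integrable).\<close>
definition Lp_norm :: "'a measure \<Rightarrow> real \<Rightarrow> ('a \<Rightarrow> real) \<Rightarrow> real" where
  "Lp_norm M p f = (LINT x|M. \<bar>f x\<bar> powr p) powr (1/p)"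

text \<open>K(s,t), s in the target (nu) variable, t in the source (mu) variable, is in L^2_loc(mu x nu).\<close>
definition L2_loc :: "'a::euclidean_space measure \<Rightarrow> 'a measure \<Rightarrow> ('a \<Rightarrow> 'a \<Rightarrow> real) \<Rightarrow> bool" where
  "L2_loc \<nu> \<mu> K \<longleftrightarrow> (\<lambda>z. K (fst z) (snd z)) \<in> borel_measurable (\<nu> \<Otimes>\<^sub>M \<mu>) \<and>
     (\<forall>S. compact S \<longrightarrow>
        (\<integral>\<^sup>+ z. ennreal ((K (fst z) (snd z))\<^sup>2) * indicator S z \<partial>(\<nu> \<Otimes>\<^sub>M \<mu>)) < \<infinity>)"

definition restr_bounded ::
  "real \<Rightarrow> 'a::euclidean_space measure \<Rightarrow> 'a measure \<Rightarrow> ('a \<Rightarrow> 'a \<Rightarrow> real) \<Rightarrow> real \<Rightarrow> bool" where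
  "restr_bounded p \<mu> \<nu> K C \<longleftrightarrow>
    (\<forall>f g. test_fun f \<longrightarrow> test_fun g \<longrightarrow>
       (\<exists>\<delta>>0. \<forall>x\<in>fsupp f. \<forall>y\<in>fsupp g. dist x y \<ge> \<delta>) \<longrightarrow>
       \<bar>LINT z|(\<nu> \<Otimes>\<^sub>M \<mu>). K (fst z) (snd z) * f (snd z) * g (fst z)\<bar>
         \<le> C * Lp_norm \<mu> p f * Lp_norm \<nu> (p / (p - 1)) g)"

definition int_op :: "'a measure \<Rightarrow> ('b \<Rightarrow> 'a \<Rightarrow> real) \<Rightarrow> ('a \<Rightarrow> real) \<Rightarrow> 'b \<Rightarrow> real" where
  "int_op \<mu> K f s = (LINT t|\<mu>. K s t * f t)"

end

theory Submission
  imports Defs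
begin

lemma radon_sets: "radon M \<Longrightarrow> sets M = sets borel"
  by (simp add: radon_def)

lemma radon_space: "radon M \<Longrightarrow> space M = UNIV"
  using sets_eq_imp_space_eq[of M borel] by (simp add: radon_def)

lemma radon_sigma_finite:
  fixes M :: "'a::euclidean_space measure"
  assumes "radon M" shows "sigma_finite_measure M"
proof
  have fin: "\<And>n::nat. emeasure M (cball (0::'a) (real n)) \<noteq> \<infinity>"
    proof -
    fix n :: nat
    have "emeasure M (cball (0::'a) (real n)) < \<infinity>"
      using assms compact_cball unfolding radon_def by blast
    thus "emeasure M (cball (0::'a) (real n)) \<noteq> \<infinity>" by simp
  qed
  have sets: "\<And>n::nat. cball (0::'a) (real n) \<in> sets M"
    using radon_sets[OF assms] by simp
  have un: "\<Union> (range (\<lambda>n::nat. cball (0::'a) (real n))) = space M"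
  proof -
    have "x \<in> (\<Union>n. cball (0::'a) (real n))" for x
      using real_arch_simple[of "norm x"] by (auto simp: dist_norm)
    thus ?thesis using radon_space[OF assms] by blast
  qed
  show "\<exists>A. countable A \<and> A \<subseteq> sets M \<and> \<Union> A = space M \<and> (\<forall>a\<in>A. emeasure M a \<noteq> \<infinity>)"
  proof (rule exI[of _ "range (\<lambda>n::nat. cball (0::'a) (real n))"], intro conjI)
    show "range (\<lambda>n::nat. cball (0::'a) (real n)) \<subseteq> sets M" using sets by auto
    show "\<forall>a\<in>range (\<lambda>n::nat. cball (0::'a) (real n)). emeasure M a \<noteq> \<infinity>" using fin by auto
  qed (use un in simp_all)
qed

lemma radon_meas: "radon M \<Longrightarrow> f \<in> borel_measurable borel \<Longrightarrow> f \<in> borel_measurable M"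
proof -
  assume a: "radon M" "f \<in> borel_measurable borel"
  from a(2) show ?thesis by (subst measurable_cong_sets[OF radon_sets[OF a(1)] refl])
qed

lemma radon_pair_sets:
  fixes M N :: "'a::euclidean_space measure"
  assumes "radon M" "radon N" shows "sets (N \<Otimes>\<^sub>M M) = sets borel"
proof -
  have "sets (N \<Otimes>\<^sub>M M) = sets (borel \<Otimes>\<^sub>M (borel::'a measure))"
    using sets_pair_measure_cong[OF radon_sets[OF assms(2)] radon_sets[OF assms(1)]] .
  also have "\<dots> = sets borel" by (subst borel_prod) (rule refl)
  finally show ?thesis .
qed

lemma radon_pair_meas:
  fixes M N :: "'a::euclidean_space measure"
  assumes "radon M" "radon N" "f \<in> borel_measurable borel"
  shows "f \<in> borel_measurable (N \<Otimes>\<^sub>M M)"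
proof -
  from assms(3) show ?thesis by (subst measurable_cong_sets[OF radon_pair_sets[OF assms(1,2)] refl])
qed

lemma test_bounded: "test_fun f \<Longrightarrow> \<exists>B. 0 \<le> B \<and> (\<forall>x. \<bar>f x\<bar> \<le> B)"
  unfolding test_fun_def bounded_iff by (metis abs_ge_zero order_trans rangeI real_norm_def)

lemma fsupp_nz: assumes "f x \<noteq> 0" shows "x \<in> fsupp f"
proof -
  have "x \<in> {x. f x \<noteq> 0}" using assms by simp
  thus ?thesis unfolding fsupp_def by (rule subsetD[OF closure_subset])
qed

lemma abs_le_sq: "\<bar>x::real\<bar> \<le> 1 + x\<^sup>2"
proof -
  have e: "(\<bar>x\<bar> - 1)\<^sup>2 = x\<^sup>2 - 2*\<bar>x\<bar> + 1" by (simp add: power2_eq_square algebra_simps)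
  have "0 \<le> (\<bar>x\<bar> - 1)\<^sup>2" by simp
  thus ?thesis using e abs_ge_zero[of x] by linarith
qed



locale setting =
  fixes \<mu> \<nu> :: "'a::euclidean_space measure" and K :: "'a \<Rightarrow> 'a \<Rightarrow> real" and p C :: real
  assumes p: "1 < p" and C: "0 \<le> C" and rmu: "radon \<mu>" and rnu: "radon \<nu>"
    and atoms: "\<forall>x. emeasure \<mu> {x} = 0 \<or> emeasure \<nu> {x} = 0"
    and L2: "L2_loc \<nu> \<mu> K" and RB: "restr_bounded p \<mu> \<nu> K C"
begin

lemma sfmu: "sigma_finite_measure \<mu>" by (rule radon_sigma_finite[OF rmu])
lemma sfnu: "sigma_finite_measure \<nu>" by (rule radon_sigma_finite[OF rnu])

sublocale P: pair_sigma_finite \<nu> \<mu>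
  unfolding pair_sigma_finite_def using sfnu sfmu by (rule conjI)

lemma kk_meas[measurable]: "(\<lambda>z. K (fst z) (snd z)) \<in> borel_measurable (\<nu> \<Otimes>\<^sub>M \<mu>)"
  using L2 unfolding L2_loc_def by blast

lemma pmeas: "f \<in> borel_measurable borel \<Longrightarrow> f \<in> borel_measurable (\<nu> \<Otimes>\<^sub>M \<mu>)"
  by (rule radon_pair_meas[OF rmu rnu])

lemma psets: "S \<in> sets borel \<Longrightarrow> S \<in> sets (\<nu> \<Otimes>\<^sub>M \<mu>)"
  using radon_pair_sets[OF rmu rnu] by simp

lemma fin_compact: assumes "compact S" shows "emeasure (\<nu> \<Otimes>\<^sub>M \<mu>) S < \<infinity>"
proof -
  have cA: "compact (fst ` S)" by (rule compact_continuous_image[OF continuous_on_fst[OF continuous_on_id] assms])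
  have cB: "compact (snd ` S)" by (rule compact_continuous_image[OF continuous_on_snd[OF continuous_on_id] assms])
  have sub: "S \<subseteq> fst ` S \<times> snd ` S" by (rule subset_fst_snd)
  have "emeasure (\<nu> \<Otimes>\<^sub>M \<mu>) S \<le> emeasure (\<nu> \<Otimes>\<^sub>M \<mu>) (fst ` S \<times> snd ` S)"
    by (rule emeasure_mono[OF sub psets[OF borel_closed[OF compact_imp_closed[OF compact_Times[OF cA cB]]]]])
  also have "\<dots> = emeasure \<nu> (fst ` S) * emeasure \<mu> (snd ` S)"
    by (rule sigma_finite_measure.emeasure_pair_measure_Times[OF sfmu])
      (simp_all add: radon_sets[OF rnu] radon_sets[OF rmu] borel_closed compact_imp_closed cA cB)
  also have "\<dots> < \<infinity>"
  proof -
    have "emeasure \<nu> (fst ` S) < \<infinity>" using cA rnu unfolding radon_def by blast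
    moreover have "emeasure \<mu> (snd ` S) < \<infinity>" using cB rmu unfolding radon_def by blast
    ultimately show ?thesis by (simp add: ennreal_mult_less_top)
  qed
  finally show ?thesis .
qed

lemma test_meas: "test_fun f \<Longrightarrow> f \<in> borel_measurable borel"
  unfolding test_fun_def by blast

end


context setting begin

lemma int_prod:
  assumes f: "test_fun f" and g: "test_fun g" and phi: "\<phi> \<in> borel_measurable (\<nu> \<Otimes>\<^sub>M \<mu>)"
    and phib: "\<And>z. \<bar>\<phi> z\<bar> \<le> 1"
  shows "integrable (\<nu> \<Otimes>\<^sub>M \<mu>) (\<lambda>z. K (fst z) (snd z) * f (snd z) * g (fst z) * \<phi> z)"
proof -
  obtain Bf where Bf: "0 \<le> Bf" "\<And>x. \<bar>f x\<bar> \<le> Bf" using test_bounded[OF f] by blast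
  obtain Bg where Bg: "0 \<le> Bg" "\<And>x. \<bar>g x\<bar> \<le> Bg" using test_bounded[OF g] by blast
  define S where "S = fsupp g \<times> fsupp f"
  have cS: "compact S" unfolding S_def
    by (rule compact_Times) (use f g in \<open>simp_all add: test_fun_def\<close>)
  have Ss: "S \<in> sets (\<nu> \<Otimes>\<^sub>M \<mu>)" by (rule psets[OF borel_closed[OF compact_imp_closed[OF cS]]])
  have fb: "f \<in> borel_measurable borel" using f by (simp add: test_fun_def)
  have gb: "g \<in> borel_measurable borel" using g by (simp add: test_fun_def)
  have fm: "(\<lambda>z. f (snd z)) \<in> borel_measurable (\<nu> \<Otimes>\<^sub>M \<mu>)"
    by (rule measurable_compose[OF measurable_snd radon_meas[OF rmu fb]])
  have gm: "(\<lambda>z. g (fst z)) \<in> borel_measurable (\<nu> \<Otimes>\<^sub>M \<mu>)"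
    by (rule measurable_compose[OF measurable_fst radon_meas[OF rnu gb]])
  have i1: "integrable (\<nu> \<Otimes>\<^sub>M \<mu>) (indicator S :: _ \<Rightarrow> real)"
    by (rule integrable_real_indicator[OF Ss]) (use fin_compact[OF cS] in simp)
  have Sm: "(indicator S :: _ \<Rightarrow> real) \<in> borel_measurable (\<nu> \<Otimes>\<^sub>M \<mu>)"
    using Ss by (rule borel_measurable_indicator)
  have i2: "integrable (\<nu> \<Otimes>\<^sub>M \<mu>) (\<lambda>z. (K (fst z) (snd z))\<^sup>2 * indicator S z :: real)"
  proof (rule integrableI_nonneg)
    show "(\<lambda>z. (K (fst z) (snd z))\<^sup>2 * indicator S z :: real) \<in> borel_measurable (\<nu> \<Otimes>\<^sub>M \<mu>)"
      by (intro borel_measurable_times borel_measurable_power kk_meas Sm)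
    show "AE z in \<nu> \<Otimes>\<^sub>M \<mu>. 0 \<le> (K (fst z) (snd z))\<^sup>2 * indicator S z"
      by (rule AE_I2) simp
    have "(\<integral>\<^sup>+ z. ennreal ((K (fst z) (snd z))\<^sup>2 * indicator S z) \<partial>(\<nu> \<Otimes>\<^sub>M \<mu>))
        = (\<integral>\<^sup>+ z. ennreal ((K (fst z) (snd z))\<^sup>2) * indicator S z \<partial>(\<nu> \<Otimes>\<^sub>M \<mu>))"
      by (rule nn_integral_cong) (simp split: split_indicator)
    also have "\<dots> < \<infinity>" using L2 cS unfolding L2_loc_def by blast
    finally show "(\<integral>\<^sup>+ z. ennreal ((K (fst z) (snd z))\<^sup>2 * indicator S z) \<partial>(\<nu> \<Otimes>\<^sub>M \<mu>)) < \<infinity>" .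
  qed
  have i3: "integrable (\<nu> \<Otimes>\<^sub>M \<mu>) (\<lambda>z. Bf * Bg * (indicator S z + (K (fst z) (snd z))\<^sup>2 * indicator S z) :: real)"
    by (rule integrable_mult_right, rule Bochner_Integration.integrable_add[OF i1 i2])
  show ?thesis
  proof (rule Bochner_Integration.integrable_bound[OF i3])
    show "(\<lambda>z. K (fst z) (snd z) * f (snd z) * g (fst z) * \<phi> z) \<in> borel_measurable (\<nu> \<Otimes>\<^sub>M \<mu>)"
      by (intro borel_measurable_times kk_meas fm gm phi)
    show "AE z in \<nu> \<Otimes>\<^sub>M \<mu>. norm (K (fst z) (snd z) * f (snd z) * g (fst z) * \<phi> z)
        \<le> norm (Bf * Bg * (indicator S z + (K (fst z) (snd z))\<^sup>2 * indicator S z) :: real)"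
    proof (rule AE_I2)
      fix z :: "'a \<times> 'a"
      show "norm (K (fst z) (snd z) * f (snd z) * g (fst z) * \<phi> z)
        \<le> norm (Bf * Bg * (indicator S z + (K (fst z) (snd z))\<^sup>2 * indicator S z) :: real)"
      proof (cases "z \<in> S")
        case False
        have "f (snd z) = 0 \<or> g (fst z) = 0"
        proof (rule ccontr)
          assume "\<not> (f (snd z) = 0 \<or> g (fst z) = 0)"
          hence "snd z \<in> fsupp f" "fst z \<in> fsupp g" by (simp_all add: fsupp_nz)
          hence "z \<in> S" unfolding S_def by (simp add: mem_Times_iff)
          thus False using False by simp
        qed
        thus ?thesis by (elim disjE) simp_all
      next
        case True
        have "\<bar>K (fst z) (snd z) * f (snd z) * g (fst z) * \<phi> z\<bar>
            = \<bar>K (fst z) (snd z)\<bar> * \<bar>f (snd z)\<bar> * \<bar>g (fst z)\<bar> * \<bar>\<phi> z\<bar>" by (simp add: abs_mult)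
        also have "\<dots> \<le> (1 + (K (fst z) (snd z))\<^sup>2) * Bf * Bg * 1"
          by (intro mult_mono abs_le_sq Bf Bg phib) (simp_all add: Bf Bg)
        also have "\<dots> = Bf * Bg * (indicator S z + (K (fst z) (snd z))\<^sup>2 * indicator S z)"
          using True by (simp add: algebra_simps)
        finally show ?thesis using Bf Bg by simp
      qed
    qed
  qed
qed

end

context setting begin

lemma atoms_countable: "countable {s. emeasure \<mu> {s} \<noteq> 0}"
proof -
  have "{s. emeasure \<mu> {s} \<noteq> 0} \<subseteq> (\<Union>n::nat. {x. measure (restrict_space \<mu> (cball 0 (real n))) {x} \<noteq> 0})"
  proof
    fix s assume "s \<in> {s. emeasure \<mu> {s} \<noteq> 0}"
    hence ne: "emeasure \<mu> {s} \<noteq> 0" by simp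
    obtain n :: nat where n: "norm s \<le> real n" using real_arch_simple by blast
    have sc: "s \<in> cball 0 (real n)" using n by (simp add: dist_norm)
    have cs: "cball 0 (real n) \<inter> space \<mu> \<in> sets \<mu>" using radon_sets[OF rmu] radon_space[OF rmu] by simp
    have fin: "emeasure \<mu> {s} < \<infinity>" using rmu unfolding radon_def by (simp add: compact_sing)
    have "measure (restrict_space \<mu> (cball 0 (real n))) {s} = measure \<mu> {s}"
      by (rule measure_restrict_space[OF cs]) (use sc in simp)
    also have "measure \<mu> {s} \<noteq> 0" using ne fin by (simp add: measure_def enn2real_eq_0_iff)
    finally show "s \<in> (\<Union>n::nat. {x. measure (restrict_space \<mu> (cball 0 (real n))) {x} \<noteq> 0})" by blast
  qed
  moreover have "countable (\<Union>n::nat. {x. measure (restrict_space \<mu> (cball 0 (real n))) {x} \<noteq> 0})"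
  proof (rule countable_UN)
    fix n :: nat
    have cs: "cball 0 (real n) \<inter> space \<mu> \<in> sets \<mu>" using radon_sets[OF rmu] radon_space[OF rmu] by simp
    have "finite_measure (restrict_space \<mu> (cball 0 (real n)))"
    proof (rule finite_measureI)
      have "emeasure (restrict_space \<mu> (cball 0 (real n))) (space (restrict_space \<mu> (cball 0 (real n))))
           = emeasure \<mu> (cball 0 (real n) \<inter> space \<mu>)"
        using emeasure_restrict_space[OF cs, of "cball 0 (real n) \<inter> space \<mu>"] by (simp add: space_restrict_space)
      also have "\<dots> < \<infinity>" using rmu radon_space[OF rmu] unfolding radon_def by simp
      finally show "emeasure (restrict_space \<mu> (cball 0 (real n))) (space (restrict_space \<mu> (cball 0 (real n)))) \<noteq> \<infinity>" by simp
    qed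
    thus "countable {x. measure (restrict_space \<mu> (cball 0 (real n))) {x} \<noteq> 0}"
      by (rule finite_measure.countable_support)
  qed simp
  ultimately show ?thesis by (rule countable_subset)
qed

lemma diag_null: "{z. fst z = snd z} \<in> null_sets (\<nu> \<Otimes>\<^sub>M \<mu>)"
proof -
  define P where "P = {s. emeasure \<mu> {s} \<noteq> 0}"
  have cP: "countable P" unfolding P_def by (rule atoms_countable)
  have "emeasure \<nu> P = (\<integral>\<^sup>+x. emeasure \<nu> {x} \<partial>count_space P)"
    by (rule emeasure_countable_singleton[OF _ cP]) (simp add: radon_sets[OF rnu])
  also have "\<dots> = (\<integral>\<^sup>+x. 0 \<partial>count_space P)"
  proof (rule nn_integral_cong)
    fix x assume "x \<in> space (count_space P)"
    hence "emeasure \<mu> {x} \<noteq> 0" by (simp add: P_def)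
    thus "emeasure \<nu> {x} = 0" using atoms by blast
  qed
  finally have nuP: "emeasure \<nu> P = 0" by simp
  have Ps: "P \<in> sets \<nu>"
    by (rule sets.countable[OF _ cP]) (simp add: radon_sets[OF rnu])
  have Pn: "P \<in> null_sets \<nu>" using Ps nuP by (simp add: null_sets_def)
  have ae: "AE s in \<nu>. emeasure \<mu> {s} = 0"
    by (rule AE_I'[OF Pn]) (auto simp: P_def)
  have Ds: "{z::'a\<times>'a. fst z = snd z} \<in> sets (\<nu> \<Otimes>\<^sub>M \<mu>)"
  proof (rule psets, rule borel_closed)
    show "closed {z::'a\<times>'a. fst z = snd z}"
      by (rule closed_Collect_eq) (intro continuous_intros)+
  qed
  have "emeasure (\<nu> \<Otimes>\<^sub>M \<mu>) {z. fst z = snd z} = (\<integral>\<^sup>+s. emeasure \<mu> (Pair s -` {z. fst z = snd z}) \<partial>\<nu>)"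
    by (rule sigma_finite_measure.emeasure_pair_measure_alt[OF sfmu Ds])
  also have "\<dots> = (\<integral>\<^sup>+s. emeasure \<mu> {s} \<partial>\<nu>)"
  proof (rule nn_integral_cong)
    fix s :: 'a have "Pair s -` {z::'a\<times>'a. fst z = snd z} = {s}" by auto
    thus "emeasure \<mu> (Pair s -` {z::'a\<times>'a. fst z = snd z}) = emeasure \<mu> {s}" by simp
  qed
  also have "\<dots> = (\<integral>\<^sup>+s. 0 \<partial>\<nu>)" by (rule nn_integral_cong_AE[OF ae])
  finally show ?thesis using Ds by (simp add: null_sets_def)
qed

lemma diag_AE: "AE z in \<nu> \<Otimes>\<^sub>M \<mu>. fst z \<noteq> snd z"
  by (rule AE_I'[OF diag_null]) auto

end


definition cidx :: "real \<Rightarrow> 'a::euclidean_space \<Rightarrow> 'a" where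
  "cidx e x = (\<Sum>b\<in>Basis. real_of_int \<lfloor>(x \<bullet> b) / e\<rfloor> *\<^sub>R b)"

lemma cidx_inner: "b \<in> Basis \<Longrightarrow> cidx e x \<bullet> b = real_of_int \<lfloor>(x \<bullet> b) / e\<rfloor>"
  unfolding cidx_def by (rule inner_sum_left_Basis)

lemma cidx_eq: "cidx e x = cidx e y \<longleftrightarrow> (\<forall>b\<in>Basis. \<lfloor>(x \<bullet> b) / e\<rfloor> = \<lfloor>(y \<bullet> b) / e\<rfloor>)"
proof
  assume "cidx e x = cidx e y"
  thus "\<forall>b\<in>Basis. \<lfloor>(x \<bullet> b) / e\<rfloor> = \<lfloor>(y \<bullet> b) / e\<rfloor>"
    using cidx_inner by (metis of_int_eq_iff)
next
  assume "\<forall>b\<in>Basis. \<lfloor>(x \<bullet> b) / e\<rfloor> = \<lfloor>(y \<bullet> b) / e\<rfloor>"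
  thus "cidx e x = cidx e y" unfolding cidx_def by (intro sum.cong) simp_all
qed

lemma cidx_meas: "cidx e \<in> borel_measurable borel"
  unfolding cidx_def by measurable

definition core :: "real \<Rightarrow> real \<Rightarrow> 'a::euclidean_space set" where
  "core e h = {x. \<forall>b\<in>Basis. (x \<bullet> b) / e - real_of_int \<lfloor>(x \<bullet> b) / e\<rfloor> \<le> 1 - h}"

lemma core_sets: "core e h \<in> sets borel"
  unfolding core_def by measurable

lemma floor_gap:
  fixes u v h :: real
  assumes "u - real_of_int \<lfloor>u\<rfloor> \<le> 1 - h" "\<lfloor>u\<rfloor> < \<lfloor>v\<rfloor>"
  shows "h \<le> v - u"
proof -
  have "real_of_int \<lfloor>u\<rfloor> + 1 \<le> real_of_int \<lfloor>v\<rfloor>" using assms(2) by linarith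
  moreover have "real_of_int \<lfloor>v\<rfloor> \<le> v" by (rule of_int_floor_le)
  ultimately show ?thesis using assms(1) by linarith
qed

lemma core_sep:
  fixes x y :: "'a::euclidean_space"
  assumes e: "0 < e" and x: "x \<in> core e h" and y: "y \<in> core e h" and ne: "cidx e x \<noteq> cidx e y"
  shows "e * h \<le> dist x y"
proof -
  obtain b where b: "b \<in> Basis" and fne: "\<lfloor>(x \<bullet> b) / e\<rfloor> \<noteq> \<lfloor>(y \<bullet> b) / e\<rfloor>"
    using ne cidx_eq by blast
  have xb: "(x \<bullet> b) / e - real_of_int \<lfloor>(x \<bullet> b) / e\<rfloor> \<le> 1 - h" using x b by (simp add: core_def)
  have yb: "(y \<bullet> b) / e - real_of_int \<lfloor>(y \<bullet> b) / e\<rfloor> \<le> 1 - h" using y b by (simp add: core_def)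
  have "h \<le> \<bar>(y \<bullet> b) / e - (x \<bullet> b) / e\<bar>"
  proof (cases "\<lfloor>(x \<bullet> b) / e\<rfloor> < \<lfloor>(y \<bullet> b) / e\<rfloor>")
    case True
    from floor_gap[OF xb True] show ?thesis by linarith
  next
    case False
    hence "\<lfloor>(y \<bullet> b) / e\<rfloor> < \<lfloor>(x \<bullet> b) / e\<rfloor>" using fne by linarith
    from floor_gap[OF yb this] show ?thesis by linarith
  qed
  also have "\<bar>(y \<bullet> b) / e - (x \<bullet> b) / e\<bar> = \<bar>(x - y) \<bullet> b\<bar> / e"
    using e by (simp add: inner_diff_left diff_divide_distrib[symmetric] abs_minus_commute)
  finally have "e * h \<le> \<bar>(x - y) \<bullet> b\<bar>" using e by (simp add: field_simps)
  also have "\<dots> \<le> norm (x - y)" by (rule Basis_le_norm[OF b])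
  finally show ?thesis by (simp add: dist_norm)
qed

lemma core_lim:
  fixes x :: "'a::euclidean_space"
  shows "eventually (\<lambda>n. x \<in> core e (1 / real (Suc n))) sequentially"
proof -
  have "\<forall>b\<in>Basis. eventually (\<lambda>n. (x \<bullet> b) / e - real_of_int \<lfloor>(x \<bullet> b) / e\<rfloor> \<le> 1 - 1 / real (Suc n)) sequentially"
  proof
    fix b :: 'a
    define u where "u = (x \<bullet> b) / e - real_of_int \<lfloor>(x \<bullet> b) / e\<rfloor>"
    have "u < 1" unfolding u_def by linarith
    hence "0 < 1 - u" by simp
    then obtain N :: nat where N: "1 / real (Suc N) < 1 - u"
      using nat_approx_posE by blast
    have "\<forall>n\<ge>N. u \<le> 1 - 1 / real (Suc n)"
    proof (intro allI impI)
      fix n assume "N \<le> n"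
      hence "1 / real (Suc n) \<le> 1 / real (Suc N)" by (simp add: frac_le)
      thus "u \<le> 1 - 1 / real (Suc n)" using N by linarith
    qed
    thus "eventually (\<lambda>n. (x \<bullet> b) / e - real_of_int \<lfloor>(x \<bullet> b) / e\<rfloor> \<le> 1 - 1 / real (Suc n)) sequentially"
      unfolding u_def eventually_sequentially by blast
  qed
  hence "eventually (\<lambda>n. \<forall>b\<in>Basis. (x \<bullet> b) / e - real_of_int \<lfloor>(x \<bullet> b) / e\<rfloor> \<le> 1 - 1 / real (Suc n)) sequentially"
    by (simp add: eventually_ball_finite)
  thus ?thesis by (simp add: core_def)
qed

lemma closure_sep:
  fixes A B :: "'a::metric_space set"
  assumes "\<forall>x\<in>A. \<forall>y\<in>B. d \<le> dist x y" "x \<in> closure A" "y \<in> closure B"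
  shows "d \<le> dist x y"
proof -
  have 1: "\<forall>y\<in>B. d \<le> dist x y"
  proof
    fix y assume yB: "y \<in> B"
    have "closure A \<subseteq> {x. d \<le> dist x y}"
    proof (rule closure_minimal)
      show "A \<subseteq> {x. d \<le> dist x y}" using assms(1) yB by blast
      show "closed {x. d \<le> dist x y}"
        by (intro closed_Collect_le continuous_on_const continuous_on_dist continuous_on_id)
    qed
    thus "d \<le> dist x y" using assms(2) by blast
  qed
  have "closure B \<subseteq> {y. d \<le> dist x y}"
  proof (rule closure_minimal)
    show "B \<subseteq> {y. d \<le> dist x y}" using 1 by blast
    show "closed {y. d \<le> dist x y}"
      by (intro closed_Collect_le continuous_on_const continuous_on_dist continuous_on_id)
  qed
  thus ?thesis using assms(3) by blast
qed

context setting begin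

lemma bil_lim:
  assumes f: "test_fun f" and g: "test_fun g"
    and phim: "\<And>n. \<phi> n \<in> borel_measurable (\<nu> \<Otimes>\<^sub>M \<mu>)" and phib: "\<And>n z. \<bar>\<phi> n z\<bar> \<le> 1"
    and psim: "\<psi> \<in> borel_measurable (\<nu> \<Otimes>\<^sub>M \<mu>)"
    and lim: "AE z in \<nu> \<Otimes>\<^sub>M \<mu>. (\<lambda>n. \<phi> n z) \<longlonglongrightarrow> \<psi> z"
  shows "(\<lambda>n. \<integral>z. K (fst z) (snd z) * f (snd z) * g (fst z) * \<phi> n z \<partial>(\<nu> \<Otimes>\<^sub>M \<mu>))
      \<longlonglongrightarrow> (\<integral>z. K (fst z) (snd z) * f (snd z) * g (fst z) * \<psi> z \<partial>(\<nu> \<Otimes>\<^sub>M \<mu>))"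
proof (rule integral_dominated_convergence)
  have i1: "integrable (\<nu> \<Otimes>\<^sub>M \<mu>) (\<lambda>z. K (fst z) (snd z) * f (snd z) * g (fst z) * 1)"
    by (rule int_prod[OF f g]) simp_all
  show "integrable (\<nu> \<Otimes>\<^sub>M \<mu>) (\<lambda>z. norm (K (fst z) (snd z) * f (snd z) * g (fst z) * 1))"
    using i1 by (rule integrable_norm)
  show "\<And>n. (\<lambda>z. K (fst z) (snd z) * f (snd z) * g (fst z) * \<phi> n z) \<in> borel_measurable (\<nu> \<Otimes>\<^sub>M \<mu>)"
    using int_prod[OF f g phim phib] by (rule borel_measurable_integrable)
  have "(\<lambda>z. K (fst z) (snd z) * f (snd z) * g (fst z) * 1) \<in> borel_measurable (\<nu> \<Otimes>\<^sub>M \<mu>)"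
    using i1 by (rule borel_measurable_integrable)
  thus "(\<lambda>z. K (fst z) (snd z) * f (snd z) * g (fst z) * \<psi> z) \<in> borel_measurable (\<nu> \<Otimes>\<^sub>M \<mu>)"
    using psim by simp
  show "AE z in \<nu> \<Otimes>\<^sub>M \<mu>. (\<lambda>n. K (fst z) (snd z) * f (snd z) * g (fst z) * \<phi> n z)
        \<longlonglongrightarrow> K (fst z) (snd z) * f (snd z) * g (fst z) * \<psi> z"
    using lim by eventually_elim (intro tendsto_intros)
  show "\<And>n. AE z in \<nu> \<Otimes>\<^sub>M \<mu>. norm (K (fst z) (snd z) * f (snd z) * g (fst z) * \<phi> n z)
        \<le> norm (K (fst z) (snd z) * f (snd z) * g (fst z) * 1)"
  proof (rule AE_I2)
    fix n z
    have "\<bar>K (fst z) (snd z) * f (snd z) * g (fst z)\<bar> * \<bar>\<phi> n z\<bar> \<le> \<bar>K (fst z) (snd z) * f (snd z) * g (fst z)\<bar> * 1"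
      by (rule mult_left_mono[OF phib]) simp
    thus "norm (K (fst z) (snd z) * f (snd z) * g (fst z) * \<phi> n z)
        \<le> norm (K (fst z) (snd z) * f (snd z) * g (fst z) * 1)" by (simp add: abs_mult)
  qed
qed

end


lemma test_meas0: "test_fun f \<Longrightarrow> f \<in> borel_measurable borel"
  unfolding test_fun_def by blast

lemma test_mult_ind:
  assumes f: "test_fun f" and A: "A \<in> sets borel"
  shows "test_fun (\<lambda>t. f t * indicator A t)"
proof -
  obtain B where B: "0 \<le> B" "\<And>x. \<bar>f x\<bar> \<le> B" using test_bounded[OF f] by blast
  have m: "(\<lambda>t. f t * indicator A t) \<in> borel_measurable borel"
    by (intro borel_measurable_times test_meas0[OF f] borel_measurable_indicator A)
  have b: "bounded (range (\<lambda>t. f t * indicator A t))"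
    unfolding bounded_iff
  proof (intro exI[of _ B] ballI)
    fix y assume "y \<in> range (\<lambda>t. f t * indicator A t)"
    then obtain t where y: "y = f t * indicator A t" by blast
    show "norm y \<le> B" using B(2)[of t] B(1) by (simp add: y indicator_def)
  qed
  have sub: "fsupp (\<lambda>t. f t * indicator A t) \<subseteq> fsupp f"
    unfolding fsupp_def by (rule closure_mono) auto
  have "compact (fsupp f \<inter> fsupp (\<lambda>t. f t * indicator A t))"
    by (rule compact_Int_closed) (use f in \<open>simp_all add: test_fun_def fsupp_def\<close>)
  also have "fsupp f \<inter> fsupp (\<lambda>t. f t * indicator A t) = fsupp (\<lambda>t. f t * indicator A t)"
    using sub by blast
  finally show ?thesis using m b unfolding test_fun_def by blast
qed

lemma test_powr_int:
  fixes M :: "'a::euclidean_space measure"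
  assumes M: "radon M" and h: "test_fun h" and r: "0 < r"
  shows "integrable M (\<lambda>x. \<bar>h x\<bar> powr r)"
proof -
  obtain B where B: "0 \<le> B" "\<And>x. \<bar>h x\<bar> \<le> B" using test_bounded[OF h] by blast
  have cS: "compact (fsupp h)" using h by (simp add: test_fun_def)
  have Ss: "fsupp h \<in> sets M" using radon_sets[OF M] cS by (simp add: borel_compact)
  have fin: "emeasure M (fsupp h) < \<infinity>" using M cS unfolding radon_def by blast
  have i: "integrable M (\<lambda>x. B powr r * indicator (fsupp h) x :: real)"
    by (rule integrable_mult_right, rule integrable_real_indicator[OF Ss]) (use fin in simp)
  have hm: "h \<in> borel_measurable M" by (rule radon_meas[OF M test_meas0[OF h]])
  show ?thesis
  proof (rule Bochner_Integration.integrable_bound[OF i])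
    show "(\<lambda>x. \<bar>h x\<bar> powr r) \<in> borel_measurable M" using hm by measurable
    show "AE x in M. norm (\<bar>h x\<bar> powr r) \<le> norm (B powr r * indicator (fsupp h) x :: real)"
    proof (rule AE_I2)
      fix x
      show "norm (\<bar>h x\<bar> powr r) \<le> norm (B powr r * indicator (fsupp h) x :: real)"
      proof (cases "h x = 0")
        case True thus ?thesis by simp
      next
        case False
        hence "x \<in> fsupp h" by (rule fsupp_nz)
        moreover have "\<bar>h x\<bar> powr r \<le> B powr r" by (rule powr_mono2) (use r B in auto)
        ultimately show ?thesis by simp
      qed
    qed
  qed
qed

lemma Lp_mono:
  fixes M :: "'a::euclidean_space measure"
  assumes M: "radon M" and h1: "test_fun h1" and h2: "test_fun h2" and r: "0 < r"
    and le: "\<And>x. \<bar>h1 x\<bar> \<le> \<bar>h2 x\<bar>"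
  shows "Lp_norm M r h1 \<le> Lp_norm M r h2"
  unfolding Lp_norm_def
proof (rule powr_mono2)
  show "0 \<le> 1 / r" using r by simp
  show "0 \<le> (LINT x|M. \<bar>h1 x\<bar> powr r)" by (rule integral_nonneg_AE) simp
  show "(LINT x|M. \<bar>h1 x\<bar> powr r) \<le> (LINT x|M. \<bar>h2 x\<bar> powr r)"
    by (rule integral_mono[OF test_powr_int[OF M h1 r] test_powr_int[OF M h2 r]])
       (rule powr_mono2, use r le in auto)
qed



lemma Lp_nonneg: "0 \<le> Lp_norm M r h"
  unfolding Lp_norm_def by simp

lemma cidx_vimage: "S \<in> sets borel \<Longrightarrow> cidx e -` S \<in> sets borel"
  using measurable_sets_borel[OF cidx_meas] by (metis inf_top.right_neutral space_borel)

context setting begin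

lemma q_pos: "0 < p / (p - 1)" using p by simp

lemma RB_ext:
  assumes f: "test_fun f" and g: "test_fun g" and e: "0 < e" and S: "S \<in> sets borel"
    and A_def: "A = cidx e -` S" and B_def: "B = cidx e -` (- S)"
  shows "\<bar>\<integral>z. K (fst z) (snd z) * f (snd z) * g (fst z) * (indicator A (snd z) * indicator B (fst z)) \<partial>(\<nu> \<Otimes>\<^sub>M \<mu>)\<bar>
    \<le> C * Lp_norm \<mu> p (\<lambda>t. f t * indicator A t) * Lp_norm \<nu> (p / (p - 1)) (\<lambda>s. g s * indicator B s)"
proof -
  have As[measurable]: "A \<in> sets borel" unfolding A_def by (rule cidx_vimage[OF S])
  have Bs[measurable]: "B \<in> sets borel" unfolding B_def by (rule cidx_vimage) (use S in simp)
  define c where "c n = (core e (1 / real (Suc n)) :: 'a set)" for n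
  have cs[measurable]: "c n \<in> sets borel" for n unfolding c_def by (rule core_sets)
  define fn where "fn n = (\<lambda>t. (f t * indicator A t) * indicator (c n) t)" for n
  define gn where "gn n = (\<lambda>t. (g t * indicator B t) * indicator (c n) t)" for n
  have tfA: "test_fun (\<lambda>t. f t * indicator A t)" by (rule test_mult_ind[OF f As])
  have tgB: "test_fun (\<lambda>t. g t * indicator B t)" by (rule test_mult_ind[OF g Bs])
  have tf: "test_fun (fn n)" for n unfolding fn_def by (rule test_mult_ind[OF tfA cs])
  have tg: "test_fun (gn n)" for n unfolding gn_def by (rule test_mult_ind[OF tgB cs])
  define lhs where "lhs n = (\<integral>z. K (fst z) (snd z) * fn n (snd z) * gn n (fst z) \<partial>(\<nu> \<Otimes>\<^sub>M \<mu>))" for n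
  have bnd: "\<bar>lhs n\<bar> \<le> C * Lp_norm \<mu> p (\<lambda>t. f t * indicator A t) * Lp_norm \<nu> (p / (p - 1)) (\<lambda>s. g s * indicator B s)" for n
  proof -
    have sepAB: "\<forall>x\<in>A \<inter> c n. \<forall>y\<in>B \<inter> c n. e * (1 / real (Suc n)) \<le> dist x y"
    proof (intro ballI)
      fix x y assume x: "x \<in> A \<inter> c n" and y: "y \<in> B \<inter> c n"
      have "cidx e x \<noteq> cidx e y" using x y unfolding A_def B_def by auto
      moreover have "x \<in> core e (1 / real (Suc n))" "y \<in> core e (1 / real (Suc n))"
        using x y by (simp_all add: c_def)
      ultimately show "e * (1 / real (Suc n)) \<le> dist x y"
        using core_sep[OF e] by blast
    qed
    have sf: "fsupp (fn n) \<subseteq> closure (A \<inter> c n)"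
      unfolding fsupp_def fn_def by (rule closure_mono) (auto simp: indicator_def split: if_splits)
    have sg: "fsupp (gn n) \<subseteq> closure (B \<inter> c n)"
      unfolding fsupp_def gn_def by (rule closure_mono) (auto simp: indicator_def split: if_splits)
    have sep: "\<exists>\<delta>>0. \<forall>x\<in>fsupp (fn n). \<forall>y\<in>fsupp (gn n). dist x y \<ge> \<delta>"
    proof (intro exI[of _ "e * (1 / real (Suc n))"] conjI ballI)
      show "0 < e * (1 / real (Suc n))" using e by simp
      fix x y assume "x \<in> fsupp (fn n)" "y \<in> fsupp (gn n)"
      thus "e * (1 / real (Suc n)) \<le> dist x y"
        using closure_sep[OF sepAB] sf sg by blast
    qed
    have "\<bar>lhs n\<bar> \<le> C * Lp_norm \<mu> p (fn n) * Lp_norm \<nu> (p / (p - 1)) (gn n)"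
      using RB tf tg sep unfolding restr_bounded_def lhs_def by blast
    also have "\<dots> \<le> C * Lp_norm \<mu> p (\<lambda>t. f t * indicator A t) * Lp_norm \<nu> (p / (p - 1)) (\<lambda>s. g s * indicator B s)"
    proof (intro mult_mono mult_left_mono Lp_mono[OF rmu tf[of n] tfA] Lp_mono[OF rnu tg[of n] tgB] C Lp_nonneg)
      show "0 < p" using p by simp
      show "0 < p / (p - 1)" by (rule q_pos)
      show "\<And>x. \<bar>fn n x\<bar> \<le> \<bar>f x * indicator A x\<bar>" by (simp add: fn_def indicator_def abs_mult)
      show "\<And>x. \<bar>gn n x\<bar> \<le> \<bar>g x * indicator B x\<bar>" by (simp add: gn_def indicator_def abs_mult)
      show "0 \<le> C * Lp_norm \<mu> p (\<lambda>t. f t * indicator A t)" by (rule mult_nonneg_nonneg[OF C Lp_nonneg])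
    qed simp
    finally show ?thesis .
  qed
  define \<phi> where "\<phi> n z = (indicator A (snd z) * indicator (c n) (snd z) * (indicator B (fst z) * indicator (c n) (fst z)) :: real)" for n and z :: "'a \<times> 'a"
  define \<psi> where "\<psi> z = (indicator A (snd z) * indicator B (fst z) :: real)" for z :: "'a \<times> 'a"
  have eq: "lhs n = (\<integral>z. K (fst z) (snd z) * f (snd z) * g (fst z) * \<phi> n z \<partial>(\<nu> \<Otimes>\<^sub>M \<mu>))" for n
    unfolding lhs_def fn_def gn_def \<phi>_def by (rule Bochner_Integration.integral_cong) (simp_all add: mult_ac)
  have lim: "(\<lambda>n. \<integral>z. K (fst z) (snd z) * f (snd z) * g (fst z) * \<phi> n z \<partial>(\<nu> \<Otimes>\<^sub>M \<mu>))
      \<longlonglongrightarrow> (\<integral>z. K (fst z) (snd z) * f (snd z) * g (fst z) * \<psi> z \<partial>(\<nu> \<Otimes>\<^sub>M \<mu>))"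
  proof (rule bil_lim[OF f g])
    have [measurable]: "A \<in> sets \<mu>" "B \<in> sets \<nu>" "c n \<in> sets \<mu>" "c n \<in> sets \<nu>" for n
      using radon_sets[OF rmu] radon_sets[OF rnu] by simp_all
    show "\<phi> n \<in> borel_measurable (\<nu> \<Otimes>\<^sub>M \<mu>)" for n
      unfolding \<phi>_def by measurable
    show "\<psi> \<in> borel_measurable (\<nu> \<Otimes>\<^sub>M \<mu>)"
      unfolding \<psi>_def by measurable
    show "\<bar>\<phi> n z\<bar> \<le> 1" for n z by (simp add: \<phi>_def indicator_def)
    show "AE z in \<nu> \<Otimes>\<^sub>M \<mu>. (\<lambda>n. \<phi> n z) \<longlonglongrightarrow> \<psi> z"
    proof (rule AE_I2)
      fix z :: "'a \<times> 'a"
      have "eventually (\<lambda>n. fst z \<in> c n \<and> snd z \<in> c n) sequentially"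
        unfolding c_def by (intro eventually_conj core_lim)
      hence "eventually (\<lambda>n. \<psi> z = \<phi> n z) sequentially"
        by eventually_elim (simp add: \<phi>_def \<psi>_def)
      thus "(\<lambda>n. \<phi> n z) \<longlonglongrightarrow> \<psi> z" by (rule Lim_transform_eventually[OF tendsto_const])
    qed
  qed
  have "(\<lambda>n. \<bar>lhs n\<bar>) \<longlonglongrightarrow> \<bar>\<integral>z. K (fst z) (snd z) * f (snd z) * g (fst z) * \<psi> z \<partial>(\<nu> \<Otimes>\<^sub>M \<mu>)\<bar>"
    unfolding eq by (rule tendsto_rabs[OF lim])
  hence "\<bar>\<integral>z. K (fst z) (snd z) * f (snd z) * g (fst z) * \<psi> z \<partial>(\<nu> \<Otimes>\<^sub>M \<mu>)\<bar>
      \<le> C * Lp_norm \<mu> p (\<lambda>t. f t * indicator A t) * Lp_norm \<nu> (p / (p - 1)) (\<lambda>s. g s * indicator B s)"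
    by (rule tendsto_le[OF trivial_limit_sequentially tendsto_const]) (use bnd in simp)
  thus ?thesis unfolding \<psi>_def .
qed

end


lemma holder_sum:
  fixes a b :: "'i \<Rightarrow> real" and p q :: real
  assumes X: "finite X" and a: "\<And>x. 0 \<le> a x" and b: "\<And>x. 0 \<le> b x"
    and p: "1 < p" and q: "1 < q" and pq: "1/p + 1/q = 1"
  shows "(\<Sum>x\<in>X. a x * b x) \<le> (\<Sum>x\<in>X. a x powr p) powr (1/p) * (\<Sum>x\<in>X. b x powr q) powr (1/q)"
proof -
  define P where "P = (\<Sum>x\<in>X. a x powr p)"
  define Q where "Q = (\<Sum>x\<in>X. b x powr q)"
  have P0: "0 \<le> P" unfolding P_def by (intro sum_nonneg) simp
  have Q0: "0 \<le> Q" unfolding Q_def by (intro sum_nonneg) simp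
  show ?thesis
  proof (cases "P = 0 \<or> Q = 0")
    case True
    have "(\<Sum>x\<in>X. a x * b x) = 0"
    proof (rule sum.neutral, rule ballI)
      fix x assume x: "x \<in> X"
      show "a x * b x = 0"
      proof (cases "P = 0")
        case True
        have "a x powr p = 0" using True x X unfolding P_def
          by (subst (asm) sum_nonneg_eq_0_iff) simp_all
        hence "a x = 0" by simp
        thus ?thesis by simp
      next
        case False
        hence Qz: "Q = 0" using \<open>P = 0 \<or> Q = 0\<close> by simp
        have "b x powr q = 0" using Qz x X unfolding Q_def
          by (subst (asm) sum_nonneg_eq_0_iff) simp_all
        hence "b x = 0" by simp
        thus ?thesis by simp
      qed
    qed
    thus ?thesis by simp
  next
    case False
    hence Pp: "0 < P" and Qp: "0 < Q" using P0 Q0 by auto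
    define \<alpha> where "\<alpha> = P powr (1/p)"
    define \<beta> where "\<beta> = Q powr (1/q)"
    have ap: "0 < \<alpha>" "0 < \<beta>" unfolding \<alpha>_def \<beta>_def using Pp Qp by simp_all
    have apow: "\<alpha> powr p = P" unfolding \<alpha>_def using Pp p by (simp add: powr_powr)
    have bpow: "\<beta> powr q = Q" unfolding \<beta>_def using Qp q by (simp add: powr_powr)
    have "(\<Sum>x\<in>X. (a x / \<alpha>) * (b x / \<beta>)) \<le> (\<Sum>x\<in>X. (a x / \<alpha>) powr p / p + (b x / \<beta>) powr q / q)"
      by (intro sum_mono Youngs_inequality p q pq) (use a b ap in simp_all)
    also have "\<dots> = (\<Sum>x\<in>X. a x powr p) / P / p + (\<Sum>x\<in>X. b x powr q) / Q / q"
      using a b ap by (simp add: powr_divide apow bpow sum.distrib sum_divide_distrib)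
    also have "\<dots> = 1" using Pp Qp pq unfolding P_def[symmetric] Q_def[symmetric] by simp
    finally have "(\<Sum>x\<in>X. a x * b x) / (\<alpha> * \<beta>) \<le> 1"
      by (simp add: sum_divide_distrib)
    hence "(\<Sum>x\<in>X. a x * b x) \<le> \<alpha> * \<beta>" using ap by (simp add: divide_le_eq)
    thus ?thesis unfolding \<alpha>_def \<beta>_def P_def Q_def .
  qed
qed

lemma count2:
  assumes I: "finite I" and i: "i \<in> I" and j: "j \<in> I" and ij: "i \<noteq> j"
  shows "4 * real (card {S\<in>Pow I. i \<in> S \<and> j \<notin> S}) = 2 ^ card I"
proof -
  have "bij_betw (insert i) (Pow (I - {i, j})) {S\<in>Pow I. i \<in> S \<and> j \<notin> S}"
  proof (rule bij_betw_byWitness[where f' = "\<lambda>S. S - {i}"])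
    show "\<forall>a\<in>Pow (I - {i, j}). insert i a - {i} = a" by auto
    show "\<forall>a\<in>{S \<in> Pow I. i \<in> S \<and> j \<notin> S}. insert i (a - {i}) = a" by auto
    show "insert i ` Pow (I - {i, j}) \<subseteq> {S \<in> Pow I. i \<in> S \<and> j \<notin> S}" using i ij by auto
    show "(\<lambda>S. S - {i}) ` {S \<in> Pow I. i \<in> S \<and> j \<notin> S} \<subseteq> Pow (I - {i, j})" by auto
  qed
  hence "card {S\<in>Pow I. i \<in> S \<and> j \<notin> S} = card (Pow (I - {i, j}))" by (simp add: bij_betw_same_card)
  also have "\<dots> = 2 ^ card (I - {i, j})" using I by (simp add: card_Pow)
  also have "card (I - {i, j}) = card I - 2" using I i j ij by (simp add: card_Diff_subset)
  finally have c: "card {S\<in>Pow I. i \<in> S \<and> j \<notin> S} = 2 ^ (card I - 2)" .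
  have "2 \<le> card I"
  proof -
    have "card {i, j} \<le> card I" using I i j by (intro card_mono) auto
    thus ?thesis using ij by simp
  qed
  then obtain k where k: "card I = k + 2" by (metis add.commute le_Suc_ex)
  show ?thesis unfolding c k by simp
qed

lemma count1:
  assumes I: "finite I" and i: "i \<in> I"
  shows "2 * real (card {S\<in>Pow I. i \<in> S}) = 2 ^ card I"
    and "2 * real (card {S\<in>Pow I. i \<notin> S}) = 2 ^ card I"
proof -
  have e2: "{S\<in>Pow I. i \<notin> S} = Pow (I - {i})" by auto
  have "bij_betw (insert i) (Pow (I - {i})) {S\<in>Pow I. i \<in> S}"
  proof (rule bij_betw_byWitness[where f' = "\<lambda>S. S - {i}"])
    show "\<forall>a\<in>Pow (I - {i}). insert i a - {i} = a" by auto
    show "\<forall>a\<in>{S \<in> Pow I. i \<in> S}. insert i (a - {i}) = a" by auto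
    show "insert i ` Pow (I - {i}) \<subseteq> {S \<in> Pow I. i \<in> S}" using i by auto
    show "(\<lambda>S. S - {i}) ` {S \<in> Pow I. i \<in> S} \<subseteq> Pow (I - {i})" by auto
  qed
  hence c1: "card {S\<in>Pow I. i \<in> S} = card (Pow (I - {i}))" by (simp add: bij_betw_same_card)
  have c: "card (Pow (I - {i})) = 2 ^ (card I - 1)" using I i by (simp add: card_Pow)
  have "1 \<le> card I" using I i by (metis One_nat_def Suc_leI card_gt_0_iff empty_iff)
  then obtain k where k: "card I = k + 1" by (metis add.commute le_Suc_ex)
  show "2 * real (card {S\<in>Pow I. i \<in> S}) = 2 ^ card I" unfolding c1 c k by simp
  show "2 * real (card {S\<in>Pow I. i \<notin> S}) = 2 ^ card I" unfolding e2 c k by simp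
qed

lemma sum_pred_card:
  "finite X \<Longrightarrow> (\<Sum>S\<in>X. (if P S then 1 else 0 :: real)) = real (card {S\<in>X. P S})"
  by (simp add: sum.If_cases Int_def)

lemma cidx_finite:
  fixes X :: "'a::euclidean_space set"
  assumes "bounded X"
  shows "finite (cidx e ` X)"
proof -
  obtain R where R: "\<And>x. x \<in> X \<Longrightarrow> norm x \<le> R" using assms bounded_iff by blast
  define M where "M = \<lceil>R / \<bar>e\<bar>\<rceil> + 1"
  define F where "F k = (\<Sum>b\<in>Basis. real_of_int (k b) *\<^sub>R b :: 'a)" for k :: "'a \<Rightarrow> int"
  have "cidx e ` X \<subseteq> F ` (PiE Basis (\<lambda>_. {-M..M}))"
  proof
    fix y assume "y \<in> cidx e ` X"
    then obtain x where x: "x \<in> X" and y: "y = cidx e x" by blast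
    define k where "k = restrict (\<lambda>b. \<lfloor>(x \<bullet> b) / e\<rfloor>) Basis"
    have "k \<in> PiE Basis (\<lambda>_. {-M..M})"
    proof -
      have "\<lfloor>(x \<bullet> b) / e\<rfloor> \<in> {-M..M}" if b: "b \<in> Basis" for b
      proof -
        have "\<bar>x \<bullet> b\<bar> \<le> R" using Basis_le_norm[OF b, of x] R[OF x] by linarith
        hence "\<bar>(x \<bullet> b) / e\<bar> \<le> R / \<bar>e\<bar>"
          by (cases "e = 0") (simp_all add: abs_divide divide_right_mono)
        hence "-(R / \<bar>e\<bar>) \<le> (x \<bullet> b) / e" "(x \<bullet> b) / e \<le> R / \<bar>e\<bar>" by linarith+
        hence "- M \<le> \<lfloor>(x \<bullet> b) / e\<rfloor>" "\<lfloor>(x \<bullet> b) / e\<rfloor> \<le> M" unfolding M_def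
          by (linarith, linarith)
        thus ?thesis by simp
      qed
      thus ?thesis unfolding k_def by auto
    qed
    moreover have "F k = y" unfolding F_def y cidx_def k_def by (intro sum.cong) simp_all
    ultimately show "y \<in> F ` (PiE Basis (\<lambda>_. {-M..M}))" by blast
  qed
  moreover have "finite (F ` (PiE Basis (\<lambda>_. {-M..M})))" by (intro finite_imageI finite_PiE) simp_all
  ultimately show ?thesis by (rule finite_subset)
qed



context setting begin

lemma q_gt1: "1 < p / (p - 1)" using p by (simp add: field_simps)
lemma pq: "1 / p + 1 / (p / (p - 1)) = 1" using p by (simp add: field_simps)

lemma sum_Lp:
  fixes M :: "'a measure" and r :: real and h :: "'a \<Rightarrow> real" and I :: "'a set" and Pw :: "'a set set"
  assumes M: "radon M" and h: "test_fun h" and r: "0 < r" and e: "0 < e"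
    and I: "finite I" and hI: "\<And>t. h t \<noteq> 0 \<Longrightarrow> cidx e t \<in> I"
    and Pw: "Pw = Pow I"
    and P: "\<And>S. S \<in> Pw \<Longrightarrow> D S \<in> sets borel"
    and cnt: "\<And>t. cidx e t \<in> I \<Longrightarrow> (\<Sum>S\<in>Pw. indicator (D S) t) = (2 ^ card I / 2 :: real)"
  shows "(\<Sum>S\<in>Pw. Lp_norm M r (\<lambda>t. h t * indicator (D S) t) powr r) = (2 ^ card I / 2) * (LINT t|M. \<bar>h t\<bar> powr r)"
proof -
  have fP: "finite Pw" using I Pw by simp
  have "(\<Sum>S\<in>Pw. Lp_norm M r (\<lambda>t. h t * indicator (D S) t) powr r)
      = (\<Sum>S\<in>Pw. LINT t|M. \<bar>h t\<bar> powr r * indicator (D S) t)"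
  proof (rule sum.cong[OF refl])
    fix S assume S: "S \<in> Pw"
    have "(LINT t|M. \<bar>h t * indicator (D S) t\<bar> powr r) = (LINT t|M. \<bar>h t\<bar> powr r * indicator (D S) t)"
      by (rule Bochner_Integration.integral_cong) (simp_all add: indicator_def)
    moreover have "0 \<le> (LINT t|M. \<bar>h t * indicator (D S) t\<bar> powr r)" by (rule integral_nonneg_AE) simp
    ultimately show "Lp_norm M r (\<lambda>t. h t * indicator (D S) t) powr r = (LINT t|M. \<bar>h t\<bar> powr r * indicator (D S) t)"
      unfolding Lp_norm_def using r by (simp add: powr_powr)
  qed
  also have "\<dots> = (LINT t|M. (\<Sum>S\<in>Pw. \<bar>h t\<bar> powr r * indicator (D S) t))"
  proof (rule Bochner_Integration.integral_sum[symmetric])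
    fix S assume S: "S \<in> Pw"
    have "integrable M (\<lambda>t. \<bar>h t * indicator (D S) t\<bar> powr r)"
      by (rule test_powr_int[OF M test_mult_ind[OF h P[OF S]] r])
    also have "(\<lambda>t. \<bar>h t * indicator (D S) t\<bar> powr r) = (\<lambda>t. \<bar>h t\<bar> powr r * indicator (D S) t)"
      by (rule ext) (simp add: indicator_def)
    finally show "integrable M (\<lambda>t. \<bar>h t\<bar> powr r * indicator (D S) t)" .
  qed
  also have "\<dots> = (LINT t|M. (2 ^ card I / 2) * \<bar>h t\<bar> powr r)"
  proof (rule Bochner_Integration.integral_cong[OF refl])
    fix t
    show "(\<Sum>S\<in>Pw. \<bar>h t\<bar> powr r * indicator (D S) t) = (2 ^ card I / 2) * \<bar>h t\<bar> powr r"
    proof (cases "h t = 0")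
      case True thus ?thesis by simp
    next
      case False
      have "(\<Sum>S\<in>Pw. \<bar>h t\<bar> powr r * indicator (D S) t) = \<bar>h t\<bar> powr r * (\<Sum>S\<in>Pw. indicator (D S) t)"
        by (simp add: sum_distrib_left)
      also have "\<dots> = \<bar>h t\<bar> powr r * (2 ^ card I / 2)" using cnt[OF hI[OF False]] by simp
      finally show ?thesis by simp
    qed
  qed
  also have "\<dots> = (2 ^ card I / 2) * (LINT t|M. \<bar>h t\<bar> powr r)" by simp
  finally show ?thesis .
qed

end


context setting begin

lemma avg:
  assumes f: "test_fun f" and g: "test_fun g" and e: "0 < e"
  shows "\<bar>\<integral>z. K (fst z) (snd z) * f (snd z) * g (fst z) * (if cidx e (fst z) \<noteq> cidx e (snd z) then 1 else 0) \<partial>(\<nu> \<Otimes>\<^sub>M \<mu>)\<bar>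
    \<le> 2 * C * Lp_norm \<mu> p f * Lp_norm \<nu> (p / (p - 1)) g"
proof -
  define q where "q = p / (p - 1)"
  have q1: "1 < q" unfolding q_def by (rule q_gt1)
  have pq': "1 / p + 1 / q = 1" unfolding q_def by (rule pq)
  define I where "I = cidx e ` (fsupp f \<union> fsupp g)"
  have I: "finite I" unfolding I_def
    by (rule cidx_finite, rule bounded_Un[THEN iffD2], intro conjI compact_imp_bounded)
       (use f g in \<open>simp_all add: test_fun_def\<close>)
  have fI: "cidx e t \<in> I" if "f t \<noteq> 0" for t unfolding I_def using fsupp_nz[of f t] fsupp_nz[of g t] that by blast
  have gI: "cidx e t \<in> I" if "g t \<noteq> 0" for t unfolding I_def using fsupp_nz[of f t] fsupp_nz[of g t] that by blast
  define Pw where "Pw = Pow I"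
  have fPw: "finite Pw" unfolding Pw_def using I by simp
  define N :: real where "N = 2 ^ card I"
  have Npos: "0 < N" unfolding N_def by simp
  define A where "A S = cidx e -` S" for S :: "'a set"
  define B where "B S = cidx e -` (- S)" for S :: "'a set"
  have Sb: "S \<in> sets borel" if "S \<in> Pw" for S
  proof -
    have "finite S" using that I unfolding Pw_def by (auto intro: finite_subset)
    thus ?thesis by (intro borel_closed finite_imp_closed)
  qed
  have As: "A S \<in> sets borel" if "S \<in> Pw" for S unfolding A_def by (rule cidx_vimage[OF Sb[OF that]])
  have Bs: "B S \<in> sets borel" if "S \<in> Pw" for S unfolding B_def
    by (rule cidx_vimage) (use Sb[OF that] in simp)
  define \<psi> where "\<psi> S z = (indicator (A S) (snd z) * indicator (B S) (fst z) :: real)" for S and z :: "'a \<times> 'a"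
  define X where "X S = (\<integral>z. K (fst z) (snd z) * f (snd z) * g (fst z) * \<psi> S z \<partial>(\<nu> \<Otimes>\<^sub>M \<mu>))" for S
  define a where "a S = Lp_norm \<mu> p (\<lambda>t. f t * indicator (A S) t)" for S
  define b where "b S = Lp_norm \<nu> q (\<lambda>t. g t * indicator (B S) t)" for S
  define \<phi> where "\<phi> z = (if cidx e (fst z) \<noteq> cidx e (snd z) then 1 else 0 :: real)" for z :: "'a \<times> 'a"
  have intX: "integrable (\<nu> \<Otimes>\<^sub>M \<mu>) (\<lambda>z. K (fst z) (snd z) * f (snd z) * g (fst z) * \<psi> S z)" if S: "S \<in> Pw" for S
  proof (rule int_prod[OF f g])
    have [measurable]: "A S \<in> sets \<mu>" "B S \<in> sets \<nu>"
      using As[OF S] Bs[OF S] radon_sets[OF rmu] radon_sets[OF rnu] by simp_all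
    show "\<psi> S \<in> borel_measurable (\<nu> \<Otimes>\<^sub>M \<mu>)" unfolding \<psi>_def by measurable
    show "\<bar>\<psi> S z\<bar> \<le> 1" for z by (simp add: \<psi>_def indicator_def)
  qed
  have pt: "K (fst z) (snd z) * f (snd z) * g (fst z) * (\<Sum>S\<in>Pw. \<psi> S z)
      = (N / 4) * (K (fst z) (snd z) * f (snd z) * g (fst z) * \<phi> z)" for z
  proof (cases "f (snd z) = 0 \<or> g (fst z) = 0")
    case True thus ?thesis by auto
  next
    case False
    hence iI: "cidx e (snd z) \<in> I" and jI: "cidx e (fst z) \<in> I" using fI gI by blast+
    have "(\<Sum>S\<in>Pw. \<psi> S z) = (\<Sum>S\<in>Pw. if cidx e (snd z) \<in> S \<and> cidx e (fst z) \<notin> S then 1 else 0)"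
      by (rule sum.cong[OF refl]) (simp add: \<psi>_def A_def B_def indicator_def)
    also have "\<dots> = real (card {S\<in>Pw. cidx e (snd z) \<in> S \<and> cidx e (fst z) \<notin> S})"
      by (rule sum_pred_card[OF fPw])
    also have "\<dots> = (N / 4) * \<phi> z"
    proof (cases "cidx e (fst z) = cidx e (snd z)")
      case True
      hence "{S\<in>Pw. cidx e (snd z) \<in> S \<and> cidx e (fst z) \<notin> S} = {}" by auto
      thus ?thesis using True by (simp add: \<phi>_def)
    next
      case False
      hence "cidx e (snd z) \<noteq> cidx e (fst z)" by simp
      from count2[OF I iI jI this] show ?thesis using False unfolding Pw_def N_def \<phi>_def by simp
    qed
    finally show ?thesis by (simp add: mult_ac)
  qed
  have "(\<Sum>S\<in>Pw. X S) = (\<integral>z. (\<Sum>S\<in>Pw. K (fst z) (snd z) * f (snd z) * g (fst z) * \<psi> S z) \<partial>(\<nu> \<Otimes>\<^sub>M \<mu>))"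
    unfolding X_def by (rule Bochner_Integration.integral_sum[symmetric]) (rule intX)
  also have "\<dots> = (\<integral>z. (N / 4) * (K (fst z) (snd z) * f (snd z) * g (fst z) * \<phi> z) \<partial>(\<nu> \<Otimes>\<^sub>M \<mu>))"
    by (rule Bochner_Integration.integral_cong[OF refl]) (simp add: sum_distrib_left[symmetric] pt)
  also have "\<dots> = (N / 4) * (\<integral>z. K (fst z) (snd z) * f (snd z) * g (fst z) * \<phi> z \<partial>(\<nu> \<Otimes>\<^sub>M \<mu>))" by simp
  finally have s1: "(\<integral>z. K (fst z) (snd z) * f (snd z) * g (fst z) * \<phi> z \<partial>(\<nu> \<Otimes>\<^sub>M \<mu>)) = (4 / N) * (\<Sum>S\<in>Pw. X S)"
    using Npos by (simp add: field_simps)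
  have "\<bar>\<Sum>S\<in>Pw. X S\<bar> \<le> (\<Sum>S\<in>Pw. \<bar>X S\<bar>)" by (rule sum_abs)
  also have "\<dots> \<le> (\<Sum>S\<in>Pw. C * (a S * b S))"
  proof (rule sum_mono)
    fix S assume S: "S \<in> Pw"
    have "\<bar>X S\<bar> \<le> C * a S * b S" unfolding X_def \<psi>_def a_def b_def q_def
      by (rule RB_ext[OF f g e Sb[OF S]]) (simp_all add: A_def B_def)
    thus "\<bar>X S\<bar> \<le> C * (a S * b S)" by (simp add: mult_ac)
  qed
  also have "\<dots> = C * (\<Sum>S\<in>Pw. a S * b S)" by (simp add: sum_distrib_left)
  also have "\<dots> \<le> C * ((\<Sum>S\<in>Pw. a S powr p) powr (1/p) * (\<Sum>S\<in>Pw. b S powr q) powr (1/q))"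
    by (rule mult_left_mono[OF holder_sum[OF fPw _ _ p q1 pq'] C]) (simp_all add: a_def b_def Lp_nonneg)
  finally have s3: "\<bar>\<Sum>S\<in>Pw. X S\<bar> \<le> C * ((\<Sum>S\<in>Pw. a S powr p) powr (1/p) * (\<Sum>S\<in>Pw. b S powr q) powr (1/q))" .
  have sa: "(\<Sum>S\<in>Pw. a S powr p) = (N / 2) * (LINT t|\<mu>. \<bar>f t\<bar> powr p)"
    unfolding a_def N_def
  proof (rule sum_Lp[OF rmu f _ e I fI Pw_def As])
    show "0 < p" using p by simp
    fix t assume t: "cidx e t \<in> I"
    have "(\<Sum>S\<in>Pw. indicator (A S) t) = (\<Sum>S\<in>Pw. if cidx e t \<in> S then 1 else 0 :: real)"
      by (rule sum.cong[OF refl]) (simp add: A_def indicator_def)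
    also have "\<dots> = real (card {S\<in>Pw. cidx e t \<in> S})" by (rule sum_pred_card[OF fPw])
    also have "\<dots> = 2 ^ card I / 2" using count1(1)[OF I t] unfolding Pw_def by simp
    finally show "(\<Sum>S\<in>Pw. indicator (A S) t) = (2 ^ card I / 2 :: real)" .
  qed
  have sb: "(\<Sum>S\<in>Pw. b S powr q) = (N / 2) * (LINT t|\<nu>. \<bar>g t\<bar> powr q)"
    unfolding b_def N_def
  proof (rule sum_Lp[OF rnu g _ e I gI Pw_def Bs])
    show "0 < q" using q1 by simp
    fix t assume t: "cidx e t \<in> I"
    have "(\<Sum>S\<in>Pw. indicator (B S) t) = (\<Sum>S\<in>Pw. if cidx e t \<notin> S then 1 else 0 :: real)"
      by (rule sum.cong[OF refl]) (simp add: B_def indicator_def)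
    also have "\<dots> = real (card {S\<in>Pw. cidx e t \<notin> S})" by (rule sum_pred_card[OF fPw])
    also have "\<dots> = 2 ^ card I / 2" using count1(2)[OF I t] unfolding Pw_def by simp
    finally show "(\<Sum>S\<in>Pw. indicator (B S) t) = (2 ^ card I / 2 :: real)" .
  qed
  define F0 where "F0 = (LINT t|\<mu>. \<bar>f t\<bar> powr p)"
  define G0 where "G0 = (LINT t|\<nu>. \<bar>g t\<bar> powr q)"
  have F0: "0 \<le> F0" unfolding F0_def by (rule integral_nonneg_AE) simp
  have G0: "0 \<le> G0" unfolding G0_def by (rule integral_nonneg_AE) simp
  have N2: "0 \<le> N / 2" using Npos by simp
  have "((N / 2) * F0) powr (1/p) * ((N / 2) * G0) powr (1/q)
      = ((N / 2) powr (1/p) * (N / 2) powr (1/q)) * (F0 powr (1/p) * G0 powr (1/q))"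
    unfolding powr_mult by (simp only: mult_ac)
  also have "(N / 2) powr (1/p) * (N / 2) powr (1/q) = N / 2"
    using Npos pq' by (simp add: powr_add[symmetric])
  finally have fin: "((N / 2) * F0) powr (1/p) * ((N / 2) * G0) powr (1/q) = (N / 2) * (Lp_norm \<mu> p f * Lp_norm \<nu> q g)"
    unfolding Lp_norm_def F0_def G0_def by simp
  have "\<bar>\<integral>z. K (fst z) (snd z) * f (snd z) * g (fst z) * \<phi> z \<partial>(\<nu> \<Otimes>\<^sub>M \<mu>)\<bar> = (4 / N) * \<bar>\<Sum>S\<in>Pw. X S\<bar>"
    unfolding s1 using Npos by (simp add: abs_mult)
  also have "\<dots> \<le> (4 / N) * (C * ((N / 2) * (Lp_norm \<mu> p f * Lp_norm \<nu> q g)))"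
  proof (rule mult_left_mono)
    show "\<bar>\<Sum>S\<in>Pw. X S\<bar> \<le> C * ((N / 2) * (Lp_norm \<mu> p f * Lp_norm \<nu> q g))"
      using s3 unfolding sa sb F0_def[symmetric] G0_def[symmetric] fin .
    show "0 \<le> 4 / N" using Npos by simp
  qed
  also have "\<dots> = 2 * C * Lp_norm \<mu> p f * Lp_norm \<nu> q g" using Npos by (simp add: field_simps)
  finally show ?thesis unfolding \<phi>_def q_def .
qed

end


lemma floor_diff_lt:
  fixes x y e :: real
  assumes e: "0 < e" and eq: "\<lfloor>x / e\<rfloor> = \<lfloor>y / e\<rfloor>"
  shows "\<bar>x - y\<bar> < e"
proof -
  have "\<bar>x / e - y / e\<bar> < 1" using eq by linarith
  also have "x / e - y / e = (x - y) / e" by (simp add: diff_divide_distrib)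
  finally show ?thesis using e by (simp add: abs_divide)
qed

context setting begin

lemma bil_bound:
  assumes f: "test_fun f" and g: "test_fun g"
  shows "\<bar>\<integral>z. K (fst z) (snd z) * f (snd z) * g (fst z) \<partial>(\<nu> \<Otimes>\<^sub>M \<mu>)\<bar>
    \<le> 2 * C * Lp_norm \<mu> p f * Lp_norm \<nu> (p / (p - 1)) g"
proof -
  define e where "e n = 1 / real (Suc n)" for n
  have e: "0 < e n" for n unfolding e_def by simp
  define \<phi> where "\<phi> n z = (if cidx (e n) (fst z) \<noteq> cidx (e n) (snd z) then 1 else 0 :: real)" for n and z :: "'a \<times> 'a"
  define \<psi> where "\<psi> z = (if fst z \<noteq> snd z then 1 else 0 :: real)" for z :: "'a \<times> 'a"
  have cm[measurable]: "cidx (e n) \<in> borel_measurable \<mu>" "cidx (e n) \<in> borel_measurable \<nu>" for n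
    using radon_meas[OF rmu cidx_meas] radon_meas[OF rnu cidx_meas] by blast+
  have Ds[measurable]: "{z::'a\<times>'a. fst z = snd z} \<in> sets (\<nu> \<Otimes>\<^sub>M \<mu>)"
    using diag_null by (simp add: null_sets_def)
  have psim[measurable]: "\<psi> \<in> borel_measurable (\<nu> \<Otimes>\<^sub>M \<mu>)"
  proof -
    have "\<psi> = (\<lambda>z. 1 - indicator {z::'a\<times>'a. fst z = snd z} z)"
      by (rule ext) (simp add: \<psi>_def indicator_def)
    thus ?thesis by simp
  qed
  have lim: "(\<lambda>n. \<integral>z. K (fst z) (snd z) * f (snd z) * g (fst z) * \<phi> n z \<partial>(\<nu> \<Otimes>\<^sub>M \<mu>))
      \<longlonglongrightarrow> (\<integral>z. K (fst z) (snd z) * f (snd z) * g (fst z) * \<psi> z \<partial>(\<nu> \<Otimes>\<^sub>M \<mu>))"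
  proof (rule bil_lim[OF f g])
    show "\<phi> n \<in> borel_measurable (\<nu> \<Otimes>\<^sub>M \<mu>)" for n unfolding \<phi>_def by measurable
    show "\<psi> \<in> borel_measurable (\<nu> \<Otimes>\<^sub>M \<mu>)" by (rule psim)
    show "\<bar>\<phi> n z\<bar> \<le> 1" for n z by (simp add: \<phi>_def)
    show "AE z in \<nu> \<Otimes>\<^sub>M \<mu>. (\<lambda>n. \<phi> n z) \<longlonglongrightarrow> \<psi> z"
    proof (rule AE_I2)
      fix z :: "'a \<times> 'a"
      show "(\<lambda>n. \<phi> n z) \<longlonglongrightarrow> \<psi> z"
      proof (cases "fst z = snd z")
        case True
        hence "\<phi> n z = \<psi> z" for n by (simp add: \<phi>_def \<psi>_def)
        thus ?thesis by simp
      next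
        case False
        then obtain b where b: "b \<in> Basis" and ne: "fst z \<bullet> b \<noteq> snd z \<bullet> b"
          using euclidean_eqI by blast
        define d where "d = \<bar>fst z \<bullet> b - snd z \<bullet> b\<bar>"
        have d: "0 < d" using ne unfolding d_def by simp
        obtain N :: nat where N: "1 / real (Suc N) < d" using nat_approx_posE[OF d] by blast
        have "eventually (\<lambda>n. \<psi> z = \<phi> n z) sequentially"
          unfolding eventually_sequentially
        proof (intro exI[of _ N] allI impI)
          fix n assume n: "N \<le> n"
          have en: "e n < d"
          proof -
            have "e n \<le> 1 / real (Suc N)" unfolding e_def using n by (simp add: frac_le)
            thus ?thesis using N by linarith
          qed
          have "cidx (e n) (fst z) \<noteq> cidx (e n) (snd z)"
          proof
            assume "cidx (e n) (fst z) = cidx (e n) (snd z)"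
            hence "\<lfloor>(fst z \<bullet> b) / e n\<rfloor> = \<lfloor>(snd z \<bullet> b) / e n\<rfloor>" using b cidx_eq by blast
            hence "d < e n" unfolding d_def by (rule floor_diff_lt[OF e])
            thus False using en by simp
          qed
          thus "\<psi> z = \<phi> n z" using False by (simp add: \<phi>_def \<psi>_def)
        qed
        thus ?thesis by (rule Lim_transform_eventually[OF tendsto_const])
      qed
    qed
  qed
  have bnd: "\<bar>\<integral>z. K (fst z) (snd z) * f (snd z) * g (fst z) * \<phi> n z \<partial>(\<nu> \<Otimes>\<^sub>M \<mu>)\<bar>
      \<le> 2 * C * Lp_norm \<mu> p f * Lp_norm \<nu> (p / (p - 1)) g" for n
    unfolding \<phi>_def by (rule avg[OF f g e])
  have "\<bar>\<integral>z. K (fst z) (snd z) * f (snd z) * g (fst z) * \<psi> z \<partial>(\<nu> \<Otimes>\<^sub>M \<mu>)\<bar>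
      \<le> 2 * C * Lp_norm \<mu> p f * Lp_norm \<nu> (p / (p - 1)) g"
    by (rule tendsto_le[OF trivial_limit_sequentially tendsto_const tendsto_rabs[OF lim]]) (use bnd in simp)
  moreover have "(\<integral>z. K (fst z) (snd z) * f (snd z) * g (fst z) * \<psi> z \<partial>(\<nu> \<Otimes>\<^sub>M \<mu>))
      = (\<integral>z. K (fst z) (snd z) * f (snd z) * g (fst z) \<partial>(\<nu> \<Otimes>\<^sub>M \<mu>))"
  proof (rule integral_cong_AE)
    have i: "integrable (\<nu> \<Otimes>\<^sub>M \<mu>) (\<lambda>z. K (fst z) (snd z) * f (snd z) * g (fst z) * 1)"
      by (rule int_prod[OF f g]) simp_all
    hence m: "(\<lambda>z. K (fst z) (snd z) * f (snd z) * g (fst z)) \<in> borel_measurable (\<nu> \<Otimes>\<^sub>M \<mu>)"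
      using borel_measurable_integrable by fastforce
    show "(\<lambda>z. K (fst z) (snd z) * f (snd z) * g (fst z)) \<in> borel_measurable (\<nu> \<Otimes>\<^sub>M \<mu>)" by (rule m)
    show "(\<lambda>z. K (fst z) (snd z) * f (snd z) * g (fst z) * \<psi> z) \<in> borel_measurable (\<nu> \<Otimes>\<^sub>M \<mu>)"
      using m psim by (rule borel_measurable_times)
    show "AE z in \<nu> \<Otimes>\<^sub>M \<mu>. K (fst z) (snd z) * f (snd z) * g (fst z) * \<psi> z = K (fst z) (snd z) * f (snd z) * g (fst z)"
      using diag_AE by eventually_elim (simp add: \<psi>_def)
  qed
  ultimately show ?thesis by simp
qed

end


lemma sgn_abs_powr:
  fixes x :: real assumes "1 < p"
  shows "x * (sgn x * \<bar>x\<bar> powr (p - 1)) = \<bar>x\<bar> powr p"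
proof (cases "x = 0")
  case True thus ?thesis using assms by simp
next
  case False
  have "x * sgn x = \<bar>x\<bar>" by (simp add: abs_sgn mult.commute)
  hence "x * (sgn x * \<bar>x\<bar> powr (p - 1)) = \<bar>x\<bar> * \<bar>x\<bar> powr (p - 1)" by (simp add: mult.assoc[symmetric])
  also have "\<dots> = \<bar>x\<bar> powr (1 + (p - 1))" by (rule powr_mult_base) simp
  finally show ?thesis by simp
qed

context setting begin

lemma T_meas:
  assumes f: "test_fun f"
  shows "int_op \<mu> K f \<in> borel_measurable \<nu>"
proof -
  have fm[measurable]: "f \<in> borel_measurable \<mu>" by (rule radon_meas[OF rmu test_meas0[OF f]])
  have "(\<lambda>z. K (fst z) (snd z) * f (snd z)) \<in> borel_measurable (\<nu> \<Otimes>\<^sub>M \<mu>)" by measurable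
  hence "case_prod (\<lambda>s t. K s t * f t) \<in> borel_measurable (\<nu> \<Otimes>\<^sub>M \<mu>)"
    by (simp add: case_prod_beta')
  from sigma_finite_measure.borel_measurable_lebesgue_integral[OF sfmu this]
  show ?thesis unfolding int_op_def[abs_def] .
qed

lemma J_bound:
  assumes f: "test_fun f"
  shows "(LINT s|\<nu>. \<bar>int_op \<mu> K f s\<bar> powr p * indicator {s. s \<in> cball 0 (real n) \<and> \<bar>int_op \<mu> K f s\<bar> \<le> real n} s)
     \<le> (2 * C * Lp_norm \<mu> p f) powr p"
proof -
  define T where "T = int_op \<mu> K f"
  define A where "A = Lp_norm \<mu> p f"
  define q where "q = p / (p - 1)"
  define E where "E = {s. s \<in> cball (0::'a) (real n) \<and> \<bar>T s\<bar> \<le> real n}"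
  define g where "g s = sgn (T s) * \<bar>T s\<bar> powr (p - 1) * indicator E s" for s
  define J where "J = (LINT s|\<nu>. \<bar>T s\<bar> powr p * indicator E s)"
  have Tnu: "T \<in> borel_measurable \<nu>" unfolding T_def by (rule T_meas[OF f])
  have Tb[measurable]: "T \<in> borel_measurable borel"
    using Tnu by (subst (asm) measurable_cong_sets[OF radon_sets[OF rnu] refl])
  have Eb[measurable]: "E \<in> sets borel" unfolding E_def by measurable
  have gb: "g \<in> borel_measurable borel" unfolding g_def by measurable
  have gbound: "\<bar>g s\<bar> \<le> real n powr (p - 1)" for s
  proof (cases "s \<in> E")
    case True
    hence "\<bar>T s\<bar> \<le> real n" unfolding E_def by simp
    hence "\<bar>T s\<bar> powr (p - 1) \<le> real n powr (p - 1)" using p by (intro powr_mono2) simp_all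
    moreover have "\<bar>sgn (T s)\<bar> \<le> 1" by (simp add: abs_sgn_eq)
    ultimately have "\<bar>sgn (T s)\<bar> * \<bar>T s\<bar> powr (p - 1) \<le> 1 * real n powr (p - 1)"
      by (intro mult_mono) simp_all
    thus ?thesis using True by (simp add: g_def abs_mult)
  next
    case False thus ?thesis by (simp add: g_def)
  qed
  have tg: "test_fun g"
    unfolding test_fun_def
  proof (intro conjI gb)
    show "bounded (range g)" unfolding bounded_iff using gbound by (metis real_norm_def rangeE)
    have sub: "fsupp g \<subseteq> cball 0 (real n)"
      unfolding fsupp_def by (rule closure_minimal) (auto simp: g_def E_def indicator_def split: if_splits)
    have "compact (cball 0 (real n) \<inter> fsupp g)"
      by (rule compact_Int_closed[OF compact_cball]) (simp add: fsupp_def)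
    also have "cball 0 (real n) \<inter> fsupp g = fsupp g" using sub by blast
    finally show "compact (fsupp g)" .
  qed
  have q1: "1 < q" unfolding q_def by (rule q_gt1)
  have pq1: "(p - 1) * q = p" unfolding q_def using p by simp
  have gq: "\<bar>g s\<bar> powr q = \<bar>T s\<bar> powr p * indicator E s" for s
  proof (cases "T s = 0 \<or> s \<notin> E")
    case True thus ?thesis using p q1 by (auto simp: g_def)
  next
    case False
    hence "\<bar>g s\<bar> = \<bar>T s\<bar> powr (p - 1)" by (simp add: g_def abs_mult)
    hence "\<bar>g s\<bar> powr q = \<bar>T s\<bar> powr ((p - 1) * q)" by (simp add: powr_powr)
    thus ?thesis using False pq1 by simp
  qed
  have J0: "0 \<le> J" unfolding J_def by (rule integral_nonneg_AE) simp
  have normg: "Lp_norm \<nu> q g = J powr (1 / q)"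
    unfolding Lp_norm_def J_def gq ..
  have int: "integrable (\<nu> \<Otimes>\<^sub>M \<mu>) (\<lambda>z. K (fst z) (snd z) * f (snd z) * g (fst z) * 1)"
    by (rule int_prod[OF f tg]) simp_all
  have "(\<integral>z. K (fst z) (snd z) * f (snd z) * g (fst z) \<partial>(\<nu> \<Otimes>\<^sub>M \<mu>))
      = (\<integral>z. K (fst z) (snd z) * f (snd z) * g (fst z) * 1 \<partial>(\<nu> \<Otimes>\<^sub>M \<mu>))" by simp
  also have "\<dots> = (\<integral>s. (\<integral>t. K (fst (s, t)) (snd (s, t)) * f (snd (s, t)) * g (fst (s, t)) * 1 \<partial>\<mu>) \<partial>\<nu>)"
    by (rule P.integral_fst'[OF int, symmetric])
  also have "\<dots> = (\<integral>s. T s * g s \<partial>\<nu>)"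
    by (simp add: T_def int_op_def)
  also have "\<dots> = J" unfolding J_def g_def
    by (rule Bochner_Integration.integral_cong[OF refl])
       (simp add: mult.assoc[symmetric] sgn_abs_powr[OF p, of "T _", simplified mult.assoc[symmetric]])
  finally have Jeq: "(\<integral>z. K (fst z) (snd z) * f (snd z) * g (fst z) \<partial>(\<nu> \<Otimes>\<^sub>M \<mu>)) = J" .
  have Jle: "J \<le> 2 * C * A * J powr (1 / q)"
    using bil_bound[OF f tg] unfolding Jeq normg[unfolded q_def] A_def q_def by simp
  have "J \<le> (2 * C * A) powr p"
  proof (cases "J = 0")
    case True thus ?thesis by simp
  next
    case False
    hence Jp: "0 < J" using J0 by simp
    have "J = J powr (1 / p) * J powr (1 / q)"
      using Jp pq unfolding q_def by (simp add: powr_add[symmetric])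
    hence "J powr (1 / p) * J powr (1 / q) \<le> 2 * C * A * J powr (1 / q)" using Jle by simp
    hence r: "J powr (1 / p) \<le> 2 * C * A" using Jp by simp
    have "J = (J powr (1 / p)) powr p" using Jp p by (simp add: powr_powr)
    also have "\<dots> \<le> (2 * C * A) powr p" by (rule powr_mono2) (use r p in simp_all)
    finally show ?thesis .
  qed
  thus ?thesis unfolding J_def E_def T_def A_def .
qed

end


context setting begin

lemma main_ineq:
  assumes f: "test_fun f"
  shows "(\<integral>\<^sup>+ s. ennreal (\<bar>int_op \<mu> K f s\<bar> powr p) \<partial>\<nu>)
             \<le> ennreal ((2 * C) powr p) * (\<integral>\<^sup>+ t. ennreal (\<bar>f t\<bar> powr p) \<partial>\<mu>)"
proof -
  define T where "T = int_op \<mu> K f"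
  define A where "A = Lp_norm \<mu> p f"
  define E where "E n = {s. s \<in> cball (0::'a) (real n) \<and> \<bar>T s\<bar> \<le> real n}" for n :: nat
  define h where "h n s = ennreal (\<bar>T s\<bar> powr p * indicator (E n) s)" for n s
  have Tnu[measurable]: "T \<in> borel_measurable \<nu>" unfolding T_def by (rule T_meas[OF f])
  have Tb[measurable]: "T \<in> borel_measurable borel"
    using Tnu by (subst (asm) measurable_cong_sets[OF radon_sets[OF rnu] refl])
  have Eb[measurable]: "E n \<in> sets borel" for n unfolding E_def by measurable
  have En[measurable]: "E n \<in> sets \<nu>" for n using Eb radon_sets[OF rnu] by simp
  have hm: "h n \<in> borel_measurable \<nu>" for n unfolding h_def by measurable
  have inc: "incseq h"
  proof (rule incseq_SucI, rule le_funI)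
    fix n s
    have "E n \<subseteq> E (Suc n)" unfolding E_def by auto
    hence "indicator (E n) s \<le> (indicator (E (Suc n)) s :: real)"
      unfolding indicator_def by (cases "s \<in> E n") auto
    hence "\<bar>T s\<bar> powr p * indicator (E n) s \<le> \<bar>T s\<bar> powr p * indicator (E (Suc n)) s"
      by (rule mult_left_mono) simp
    thus "h n s \<le> h (Suc n) s" unfolding h_def by (rule ennreal_leI)
  qed
  have sup: "ennreal (\<bar>T s\<bar> powr p) = (SUP n. h n s)" for s
  proof (rule antisym)
    obtain n1 :: nat where n1: "norm s \<le> real n1" using real_arch_simple by blast
    obtain n2 :: nat where n2: "\<bar>T s\<bar> \<le> real n2" using real_arch_simple by blast
    have "s \<in> E (max n1 n2)" unfolding E_def using n1 n2 by (auto simp: dist_norm)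
    hence "h (max n1 n2) s = ennreal (\<bar>T s\<bar> powr p)" by (simp add: h_def)
    thus "ennreal (\<bar>T s\<bar> powr p) \<le> (SUP n. h n s)" by (metis SUP_upper UNIV_I)
    show "(SUP n. h n s) \<le> ennreal (\<bar>T s\<bar> powr p)"
    proof (rule SUP_least)
      fix n show "h n s \<le> ennreal (\<bar>T s\<bar> powr p)" unfolding h_def
        by (rule ennreal_leI) (simp add: indicator_def)
    qed
  qed
  have intn: "integrable \<nu> (\<lambda>s. \<bar>T s\<bar> powr p * indicator (E n) s)" for n
  proof -
    have cb: "cball (0::'a) (real n) \<in> sets \<nu>" using radon_sets[OF rnu] by simp
    have fin: "emeasure \<nu> (cball (0::'a) (real n)) < \<infinity>" using rnu compact_cball unfolding radon_def by blast
    have i: "integrable \<nu> (\<lambda>s. real n powr p * indicator (cball (0::'a) (real n)) s :: real)"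
      by (rule integrable_mult_right, rule integrable_real_indicator[OF cb]) (use fin in simp)
    show ?thesis
    proof (rule Bochner_Integration.integrable_bound[OF i])
      show "(\<lambda>s. \<bar>T s\<bar> powr p * indicator (E n) s) \<in> borel_measurable \<nu>" by measurable
      show "AE s in \<nu>. norm (\<bar>T s\<bar> powr p * indicator (E n) s) \<le> norm (real n powr p * indicator (cball (0::'a) (real n)) s :: real)"
      proof (rule AE_I2)
        fix s
        show "norm (\<bar>T s\<bar> powr p * indicator (E n) s) \<le> norm (real n powr p * indicator (cball (0::'a) (real n)) s :: real)"
        proof (cases "s \<in> E n")
          case True
          hence "\<bar>T s\<bar> \<le> real n" "s \<in> cball 0 (real n)" unfolding E_def by simp_all
          moreover have "\<bar>T s\<bar> powr p \<le> real n powr p" using \<open>\<bar>T s\<bar> \<le> real n\<close> p by (intro powr_mono2) simp_all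
          ultimately show ?thesis using True by simp
        next
          case False thus ?thesis by simp
        qed
      qed
    qed
  qed
  have hn: "integral\<^sup>N \<nu> (h n) \<le> ennreal ((2 * C * A) powr p)" for n
  proof -
    have "integral\<^sup>N \<nu> (h n) = ennreal (LINT s|\<nu>. \<bar>T s\<bar> powr p * indicator (E n) s)"
      unfolding h_def by (rule nn_integral_eq_integral[OF intn]) simp
    also have "\<dots> \<le> ennreal ((2 * C * A) powr p)"
      by (rule ennreal_leI) (use J_bound[OF f, of n] in \<open>simp add: E_def T_def A_def\<close>)
    finally show ?thesis .
  qed
  have "(\<integral>\<^sup>+ s. ennreal (\<bar>T s\<bar> powr p) \<partial>\<nu>) = (\<integral>\<^sup>+ s. (SUP n. h n s) \<partial>\<nu>)"
    by (simp add: sup)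
  also have "\<dots> = (SUP n. integral\<^sup>N \<nu> (h n))"
    by (rule nn_integral_monotone_convergence_SUP[OF inc hm])
  also have "\<dots> \<le> ennreal ((2 * C * A) powr p)" by (rule SUP_least) (rule hn)
  also have "\<dots> = ennreal ((2 * C) powr p) * (\<integral>\<^sup>+ t. ennreal (\<bar>f t\<bar> powr p) \<partial>\<mu>)"
  proof -
    have pp: "0 < p" using p by simp
    have F0: "0 \<le> (LINT t|\<mu>. \<bar>f t\<bar> powr p)" by (rule integral_nonneg_AE) simp
    have "(\<integral>\<^sup>+ t. ennreal (\<bar>f t\<bar> powr p) \<partial>\<mu>) = ennreal (LINT t|\<mu>. \<bar>f t\<bar> powr p)"
      by (rule nn_integral_eq_integral[OF test_powr_int[OF rmu f pp]]) simp
    moreover have "A powr p = (LINT t|\<mu>. \<bar>f t\<bar> powr p)"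
      unfolding A_def Lp_norm_def using F0 pp by (simp add: powr_powr)
    moreover have "(2 * C * A) powr p = (2 * C) powr p * A powr p" by (rule powr_mult)
    ultimately show ?thesis using F0 by (simp add: ennreal_mult)
  qed
  finally show ?thesis unfolding T_def .
qed

end

theorem theorem3p4:
  fixes \<mu> \<nu> :: "'a::euclidean_space measure"
    and K :: "'a \<Rightarrow> 'a \<Rightarrow> real" and p C :: real
  assumes "1 < p" and "0 \<le> C"
    and "radon \<mu>" and "radon \<nu>"
    and "\<forall>x. emeasure \<mu> {x} = 0 \<or> emeasure \<nu> {x} = 0"
    and "L2_loc \<nu> \<mu> K"
    and "restr_bounded p \<mu> \<nu> K C"
  shows "\<forall>f. test_fun f \<longrightarrow>
           int_op \<mu> K f \<in> borel_measurable \<nu> \<and>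
           (\<integral>\<^sup>+ s. ennreal (\<bar>int_op \<mu> K f s\<bar> powr p) \<partial>\<nu>)
             \<le> ennreal ((2 * C) powr p) * (\<integral>\<^sup>+ t. ennreal (\<bar>f t\<bar> powr p) \<partial>\<mu>)"
proof -
  interpret setting \<mu> \<nu> K p C using assms unfolding setting_def by blast
  show ?thesis using T_meas main_ineq by blast
qed


end
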